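(* Let $G$ be a cubical $\omega$-category with connections, $m\le n$, and $1\le i\le m-1$. Then, as operators on $G_n$, $\Phi_m\psi_i=\Phi_m$.
   Context: A cubical $\omega$-category with connections $G$ consists of sets $G_n$ ($n\ge0$), face maps $\partial^\alpha_i:G_n\to G_{n-1}$, degeneracies $\varepsilon_i:G_{n-1}\to G_n$, connections $\Gamma^\alpha_i:G_n\to G_{n+1}$ ($1\le i\le n$, $\alpha=\pm$) and partial compositions $\circ_j$ on $G_n$ ($1\le j\le n$, $a\circ_jb$ defined iff $\partial^+_ja=\partial^-_jb$) satisfying: $\partial^\alpha_i\partial^\beta_j=\partial^\beta_{j-1}\partial^\alpha_i$ ($i<j$), $\varepsilon_i\varepsilon_j=\varepsilon_{j+1}\varepsilon_i$ ($i\le j$), $\partial^\alpha_i\varepsilon_j=\varepsilon_{j-1}\partial^\alpha_i$ ($i<j$), $\varepsilon_j\partial^\alpha_{i-1}$ ($i>j$), $\mathrm{id}$ ($i=j$); $\Gamma^\alpha_i\Gamma^\beta_j=\Gamma^\beta_{j+1}\Gamma^\alpha_i$ ($i<j$), $\Gamma^\alpha_i\Gamma^\alpha_i=\Gamma^\alpha_{i+1}\Gamma^\alpha_i$, $\Gamma^\alpha_i\varepsilon_j=\varepsilon_{j+1}\Gamma^\alpha_i$ ($i<j$), $\varepsilon_j\Gamma^\alpha_{i-1}$ ($i>j$), $\Gamma^\alpha_j\varepsilon_j=\varepsilon_{j+1}\varepsilon_j$, $\partial^\alpha_i\Gamma^\beta_j=\Gamma^\beta_{j-1}\partial^\alpha_i$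 ($i<j$), $\Gamma^\beta_j\partial^\alpha_{i-1}$ ($i>j+1$), $\partial^\alpha_j\Gamma^\alpha_j=\partial^\alpha_{j+1}\Gamma^\alpha_j=\mathrm{id}$, $\partial^\alpha_j\Gamma^{-\alpha}_j=\partial^\alpha_{j+1}\Gamma^{-\alpha}_j=\varepsilon_j\partial^\alpha_j$; $\partial^-_j(a\circ_jb)=\partial^-_ja$, $\partial^+_j(a\circ_jb)=\partial^+_jb$, $\partial^\alpha_i(a\circ_jb)=\partial^\alpha_ia\circ_{j-1}\partial^\alpha_ib$ ($i<j$), $\partial^\alpha_ia\circ_j\partial^\alpha_ib$ ($i>j$); interchange for $i\ne j$; $\varepsilon_i(a\circ_jb)=\varepsilon_ia\circ_{j+1}\varepsilon_ib$ ($i\le j$), $\varepsilon_ia\circ_j\varepsilon_ib$ ($i>j$); $\Gamma^\alpha_i(a\circ_jb)=\Gamma^\alpha_ia\circ_{j+1}\Gamma^\alpha_ib$ ($i<j$), $\Gamma^\alpha_ia\circ_j\Gamma^\alpha_ib$ ($i>j$); $\Gamma^+_j(a\circ_jb)=(\Gamma^+_ja\circ_j\varepsilon_ja)\circ_{j+1}(\varepsilon_{j+1}a\circ_j\Gamma^+_jb)$, $\Gamma^-_j(a\circ_jb)=(\Gamma^-_ja\circ_j\varepsilon_{j+1}b)\circ_{j+1}(\varepsilon_jb\circ_j\Gamma^-_jb)$; each $\circ_j$ is a category structure with identities $\varepsilon_jy$; $\Gamma^+_ix\circ_i\Gamma^-_ix=\varepsilon_{i+1}x$, $\Gamma^+_ix\circ_{i+1}\Gamma^-_ix=\varepsilon_ix$.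 Folding operations on $G_n$: $\psi_ix=\Gamma^+_i\partial^-_{i+1}x\circ_{i+1}x\circ_{i+1}\Gamma^-_i\partial^+_{i+1}x$ ($1\le i\le n-1$), $\Psi_r=\psi_{r-1}\psi_{r-2}\cdots\psi_1$ ($1\le r\le n$), $\Phi_m=\Psi_1\Psi_2\cdots\Psi_m=\psi_1(\psi_2\psi_1)\cdots(\psi_{m-1}\cdots\psi_1)$ ($0\le m\le n$). *)

theory Defs
  imports Main
begin

text \<open>Conventions: the sign alpha is a bool, True = +, False = -.
  All operations carry the dimension of their (first) argument:
  face  n i a x   : partial face d^a_i : G_n -> G_(n-1), 1 <= i <= n
  degen n i x     : degeneracy eps_i : G_n -> G_(n+1), 1 <= i <= n+1
  conn  n i a x   : connection Gamma^a_i : G_n -> G_(n+1), 1 <= i <= n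
  comp  n j x y   : composition x o_j y in G_n, 1 <= j <= n,
                    defined iff face n j True x = face n j False y.\<close>

record 'a cubcat =
  cell  :: "nat \<Rightarrow> 'a set"
  face  :: "nat \<Rightarrow> nat \<Rightarrow> bool \<Rightarrow> 'a \<Rightarrow> 'a"
  degen :: "nat \<Rightarrow> nat \<Rightarrow> 'a \<Rightarrow> 'a"
  conn  :: "nat \<Rightarrow> nat \<Rightarrow> bool \<Rightarrow> 'a \<Rightarrow> 'a"
  comp  :: "nat \<Rightarrow> nat \<Rightarrow> 'a \<Rightarrow> 'a \<Rightarrow> 'a"

definition composable :: "'a cubcat \<Rightarrow> nat \<Rightarrow> nat \<Rightarrow> 'a \<Rightarrow> 'a \<Rightarrow> bool" where
  "composable G n j x y \<longleftrightarrow> x \<in> cell G n \<and> y \<in> cell G n \<and> 1 \<le> j \<and> j \<le> n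
     \<and> face G n j True x = face G n j False y"

definition cubical_omega_cat_conn :: "'a cubcat \<Rightarrow> bool" where
  "cubical_omega_cat_conn G \<longleftrightarrow>
   \<comment> \<open>closure of the operations\<close>
   (\<forall>n i a x. x \<in> cell G n \<and> 1 \<le> i \<and> i \<le> n \<longrightarrow> face G n i a x \<in> cell G (n - 1)) \<and>
   (\<forall>n i x. x \<in> cell G n \<and> 1 \<le> i \<and> i \<le> Suc n \<longrightarrow> degen G n i x \<in> cell G (Suc n)) \<and>
   (\<forall>n i a x. x \<in> cell G n \<and> 1 \<le> i \<and> i \<le> n \<longrightarrow> conn G n i a x \<in> cell G (Suc n)) \<and>
   (\<forall>n j x y. composable G n j x y \<longrightarrow> comp G n j x y \<in> cell G n) \<and>
   \<comment> \<open>d^a_i d^b_j = d^b_(j-1) d^a_i  (i < j)\<close>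
   (\<forall>n i j a b x. x \<in> cell G n \<and> 1 \<le> i \<and> i < j \<and> j \<le> n \<longrightarrow>
      face G (n - 1) i a (face G n j b x) = face G (n - 1) (j - 1) b (face G n i a x)) \<and>
   \<comment> \<open>eps_i eps_j = eps_(j+1) eps_i  (i <= j)\<close>
   (\<forall>n i j x. x \<in> cell G n \<and> 1 \<le> i \<and> i \<le> j \<and> j \<le> Suc n \<longrightarrow>
      degen G (Suc n) i (degen G n j x) = degen G (Suc n) (Suc j) (degen G n i x)) \<and>
   \<comment> \<open>d^a_i eps_j\<close>
   (\<forall>n i j a x. x \<in> cell G n \<and> 1 \<le> i \<and> i \<le> Suc n \<and> 1 \<le> j \<and> j \<le> Suc n \<longrightarrow>
      face G (Suc n) i a (degen G n j x) =
        (if i < j then degen G (n - 1) (j - 1) (face G n i a x)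
         else if j < i then degen G (n - 1) j (face G n (i - 1) a x)
         else x)) \<and>
   \<comment> \<open>Gamma^a_i Gamma^b_j = Gamma^b_(j+1) Gamma^a_i  (i < j)\<close>
   (\<forall>n i j a b x. x \<in> cell G n \<and> 1 \<le> i \<and> i < j \<and> j \<le> n \<longrightarrow>
      conn G (Suc n) i a (conn G n j b x) = conn G (Suc n) (Suc j) b (conn G n i a x)) \<and>
   \<comment> \<open>Gamma^a_i Gamma^a_i = Gamma^a_(i+1) Gamma^a_i\<close>
   (\<forall>n i a x. x \<in> cell G n \<and> 1 \<le> i \<and> i \<le> n \<longrightarrow>
      conn G (Suc n) i a (conn G n i a x) = conn G (Suc n) (Suc i) a (conn G n i a x)) \<and>
   \<comment> \<open>Gamma^a_i eps_j\<close>
   (\<forall>n i j a x. x \<in> cell G n \<and> 1 \<le> i \<and> i \<le> Suc n \<and> 1 \<le> j \<and> j \<le> Suc n \<longrightarrow>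
      conn G (Suc n) i a (degen G n j x) =
        (if i < j then degen G (Suc n) (Suc j) (conn G n i a x)
         else if j < i then degen G (Suc n) j (conn G n (i - 1) a x)
         else degen G (Suc n) (Suc j) (degen G n j x))) \<and>
   \<comment> \<open>d^a_i Gamma^b_j\<close>
   (\<forall>n i j a b x. x \<in> cell G n \<and> 1 \<le> j \<and> j \<le> n \<and> 1 \<le> i \<and> i \<le> Suc n \<longrightarrow>
      face G (Suc n) i a (conn G n j b x) =
        (if i < j then conn G (n - 1) (j - 1) b (face G n i a x)
         else if Suc j < i then conn G (n - 1) j b (face G n (i - 1) a x)
         else if a = b then x
         else degen G (n - 1) j (face G n j a x))) \<and>
   \<comment> \<open>faces of composites\<close>
   (\<forall>n j x y. composable G n j x y \<longrightarrow>
      face G n j False (comp G n j x y) = face G n j False x \<and>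
      face G n j True (comp G n j x y) = face G n j True y) \<and>
   (\<forall>n i j a x y. composable G n j x y \<and> 1 \<le> i \<and> i \<le> n \<and> i \<noteq> j \<longrightarrow>
      face G n i a (comp G n j x y) =
        (if i < j then comp G (n - 1) (j - 1) (face G n i a x) (face G n i a y)
         else comp G (n - 1) j (face G n i a x) (face G n i a y))) \<and>
   \<comment> \<open>interchange law\<close>
   (\<forall>n i j x y z w. i \<noteq> j \<and> composable G n i x y \<and> composable G n i z w
      \<and> composable G n j x z \<and> composable G n j y w \<longrightarrow>
      comp G n j (comp G n i x y) (comp G n i z w) = comp G n i (comp G n j x z) (comp G n j y w)) \<and>
   \<comment> \<open>degeneracies of composites\<close>
   (\<forall>n i j x y. composable G n j x y \<and> 1 \<le> i \<and> i \<le> Suc n \<longrightarrow>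
      degen G n i (comp G n j x y) =
        (if i \<le> j then comp G (Suc n) (Suc j) (degen G n i x) (degen G n i y)
         else comp G (Suc n) j (degen G n i x) (degen G n i y))) \<and>
   \<comment> \<open>connections of composites, i \<noteq> j\<close>
   (\<forall>n i j a x y. composable G n j x y \<and> 1 \<le> i \<and> i \<le> n \<and> i \<noteq> j \<longrightarrow>
      conn G n i a (comp G n j x y) =
        (if i < j then comp G (Suc n) (Suc j) (conn G n i a x) (conn G n i a y)
         else comp G (Suc n) j (conn G n i a x) (conn G n i a y))) \<and>
   \<comment> \<open>connections of composites, i = j\<close>
   (\<forall>n j x y. composable G n j x y \<longrightarrow>
      conn G n j True (comp G n j x y) =
        comp G (Suc n) (Suc j)
          (comp G (Suc n) j (conn G n j True x) (degen G n j x))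
          (comp G (Suc n) j (degen G n (Suc j) x) (conn G n j True y)) \<and>
      conn G n j False (comp G n j x y) =
        comp G (Suc n) (Suc j)
          (comp G (Suc n) j (conn G n j False x) (degen G n (Suc j) y))
          (comp G (Suc n) j (degen G n j y) (conn G n j False y))) \<and>
   \<comment> \<open>each o_j is a category structure with identities eps_j y\<close>
   (\<forall>n j x y z. composable G n j x y \<and> composable G n j y z \<longrightarrow>
      comp G n j (comp G n j x y) z = comp G n j x (comp G n j y z)) \<and>
   (\<forall>n j x. x \<in> cell G n \<and> 1 \<le> j \<and> j \<le> n \<longrightarrow>
      comp G n j (degen G (n - 1) j (face G n j False x)) x = x \<and>
      comp G n j x (degen G (n - 1) j (face G n j True x)) = x) \<and>
   \<comment> \<open>cancellation laws for connections\<close>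
   (\<forall>n i x. x \<in> cell G n \<and> 1 \<le> i \<and> i \<le> n \<longrightarrow>
      comp G (Suc n) i (conn G n i True x) (conn G n i False x) = degen G n (Suc i) x \<and>
      comp G (Suc n) (Suc i) (conn G n i True x) (conn G n i False x) = degen G n i x)"

definition psi :: "'a cubcat \<Rightarrow> nat \<Rightarrow> nat \<Rightarrow> 'a \<Rightarrow> 'a" where
  "psi G n i x =
     comp G n (Suc i)
       (comp G n (Suc i) (conn G (n - 1) i True (face G n (Suc i) False x)) x)
       (conn G (n - 1) i False (face G n (Suc i) True x))"

text \<open>Psi_r = psi_(r-1) ... psi_1 (psi_1 applied first); Psi_1 = id.\<close>
fun Psi :: "'a cubcat \<Rightarrow> nat \<Rightarrow> nat \<Rightarrow> 'a \<Rightarrow> 'a" where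
  "Psi G n 0 x = x"
| "Psi G n (Suc r) x = (if r = 0 then x else psi G n r (Psi G n r x))"

text \<open>Phi_m = Psi_1 Psi_2 ... Psi_m (Psi_m applied first); Phi_0 = id.\<close>
fun Phi :: "'a cubcat \<Rightarrow> nat \<Rightarrow> nat \<Rightarrow> 'a \<Rightarrow> 'a" where
  "Phi G n 0 x = x"
| "Phi G n (Suc m) x = Phi G n m (Psi G n (Suc m) x)"

end

theory Submission
  imports Defs
begin

locale cc =
  fixes G :: "'a cubcat"
  assumes ax: "cubical_omega_cat_conn G"
begin

lemmas A = ax[unfolded cubical_omega_cat_conn_def]

lemma face_cell: "x \<in> cell G n \<Longrightarrow> 1 \<le> i \<Longrightarrow> i \<le> n \<Longrightarrow> face G n i a x \<in> cell G (n - 1)"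
  using A[THEN conjunct1] by blast
lemma degen_cell: "x \<in> cell G n \<Longrightarrow> 1 \<le> i \<Longrightarrow> i \<le> Suc n \<Longrightarrow> degen G n i x \<in> cell G (Suc n)"
  using A[THEN conjunct2, THEN conjunct1] by blast
lemma conn_cell: "x \<in> cell G n \<Longrightarrow> 1 \<le> i \<Longrightarrow> i \<le> n \<Longrightarrow> conn G n i a x \<in> cell G (Suc n)"
  using A[THEN conjunct2, THEN conjunct2, THEN conjunct1] by blast
lemma comp_cell: "composable G n j x y \<Longrightarrow> comp G n j x y \<in> cell G n"
  using A[THEN conjunct2, THEN conjunct2, THEN conjunct2, THEN conjunct1] by blast
lemma face_face: "x \<in> cell G n \<Longrightarrow> 1 \<le> i \<Longrightarrow> i < j \<Longrightarrow> j \<le> n \<Longrightarrow>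
      face G (n - 1) i a (face G n j b x) = face G (n - 1) (j - 1) b (face G n i a x)"
  using A[THEN conjunct2, THEN conjunct2, THEN conjunct2, THEN conjunct2, THEN conjunct1] by blast
lemma degen_degen: "x \<in> cell G n \<Longrightarrow> 1 \<le> i \<Longrightarrow> i \<le> j \<Longrightarrow> j \<le> Suc n \<Longrightarrow>
      degen G (Suc n) i (degen G n j x) = degen G (Suc n) (Suc j) (degen G n i x)"
  using A[THEN conjunct2, THEN conjunct2, THEN conjunct2, THEN conjunct2, THEN conjunct2, THEN conjunct1] by blast
lemma face_degen: "x \<in> cell G n \<Longrightarrow> 1 \<le> i \<Longrightarrow> i \<le> Suc n \<Longrightarrow> 1 \<le> j \<Longrightarrow> j \<le> Suc n \<Longrightarrow>
      face G (Suc n) i a (degen G n j x) =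
        (if i < j then degen G (n - 1) (j - 1) (face G n i a x)
         else if j < i then degen G (n - 1) j (face G n (i - 1) a x)
         else x)"
  using A[THEN conjunct2, THEN conjunct2, THEN conjunct2, THEN conjunct2, THEN conjunct2, THEN conjunct2, THEN conjunct1] by blast
lemma conn_conn: "x \<in> cell G n \<Longrightarrow> 1 \<le> i \<Longrightarrow> i < j \<Longrightarrow> j \<le> n \<Longrightarrow>
      conn G (Suc n) i a (conn G n j b x) = conn G (Suc n) (Suc j) b (conn G n i a x)"
  using A[THEN conjunct2, THEN conjunct2, THEN conjunct2, THEN conjunct2, THEN conjunct2, THEN conjunct2, THEN conjunct2, THEN conjunct1] by blast
lemma conn_conn_same: "x \<in> cell G n \<Longrightarrow> 1 \<le> i \<Longrightarrow> i \<le> n \<Longrightarrow>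
      conn G (Suc n) i a (conn G n i a x) = conn G (Suc n) (Suc i) a (conn G n i a x)"
  using A[THEN conjunct2, THEN conjunct2, THEN conjunct2, THEN conjunct2, THEN conjunct2, THEN conjunct2, THEN conjunct2, THEN conjunct2, THEN conjunct1] by blast
lemma conn_degen: "x \<in> cell G n \<Longrightarrow> 1 \<le> i \<Longrightarrow> i \<le> Suc n \<Longrightarrow> 1 \<le> j \<Longrightarrow> j \<le> Suc n \<Longrightarrow>
      conn G (Suc n) i a (degen G n j x) =
        (if i < j then degen G (Suc n) (Suc j) (conn G n i a x)
         else if j < i then degen G (Suc n) j (conn G n (i - 1) a x)
         else degen G (Suc n) (Suc j) (degen G n j x))"
  using A[THEN conjunct2, THEN conjunct2, THEN conjunct2, THEN conjunct2, THEN conjunct2, THEN conjunct2, THEN conjunct2, THEN conjunct2, THEN conjunct2, THEN conjunct1] by blast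
lemma face_conn: "x \<in> cell G n \<Longrightarrow> 1 \<le> j \<Longrightarrow> j \<le> n \<Longrightarrow> 1 \<le> i \<Longrightarrow> i \<le> Suc n \<Longrightarrow>
      face G (Suc n) i a (conn G n j b x) =
        (if i < j then conn G (n - 1) (j - 1) b (face G n i a x)
         else if Suc j < i then conn G (n - 1) j b (face G n (i - 1) a x)
         else if a = b then x
         else degen G (n - 1) j (face G n j a x))"
  using A[THEN conjunct2, THEN conjunct2, THEN conjunct2, THEN conjunct2, THEN conjunct2, THEN conjunct2, THEN conjunct2, THEN conjunct2, THEN conjunct2, THEN conjunct2, THEN conjunct1] by blast
lemma face_comp_same: "composable G n j x y \<Longrightarrow>
      face G n j False (comp G n j x y) = face G n j False x \<and>
      face G n j True (comp G n j x y) = face G n j True y"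
  using A[THEN conjunct2, THEN conjunct2, THEN conjunct2, THEN conjunct2, THEN conjunct2, THEN conjunct2, THEN conjunct2, THEN conjunct2, THEN conjunct2, THEN conjunct2, THEN conjunct2, THEN conjunct1] by blast
lemma face_comp: "composable G n j x y \<Longrightarrow> 1 \<le> i \<Longrightarrow> i \<le> n \<Longrightarrow> i \<noteq> j \<Longrightarrow>
      face G n i a (comp G n j x y) =
        (if i < j then comp G (n - 1) (j - 1) (face G n i a x) (face G n i a y)
         else comp G (n - 1) j (face G n i a x) (face G n i a y))"
  using A[THEN conjunct2, THEN conjunct2, THEN conjunct2, THEN conjunct2, THEN conjunct2, THEN conjunct2, THEN conjunct2, THEN conjunct2, THEN conjunct2, THEN conjunct2, THEN conjunct2, THEN conjunct2, THEN conjunct1] by blast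
lemma interchange: "i \<noteq> j \<Longrightarrow> composable G n i x y \<Longrightarrow> composable G n i z w
      \<Longrightarrow> composable G n j x z \<Longrightarrow> composable G n j y w \<Longrightarrow>
      comp G n j (comp G n i x y) (comp G n i z w) = comp G n i (comp G n j x z) (comp G n j y w)"
  using A[THEN conjunct2, THEN conjunct2, THEN conjunct2, THEN conjunct2, THEN conjunct2, THEN conjunct2, THEN conjunct2, THEN conjunct2, THEN conjunct2, THEN conjunct2, THEN conjunct2, THEN conjunct2, THEN conjunct2, THEN conjunct1] by blast
lemma degen_comp: "composable G n j x y \<Longrightarrow> 1 \<le> i \<Longrightarrow> i \<le> Suc n \<Longrightarrow>
      degen G n i (comp G n j x y) =
        (if i \<le> j then comp G (Suc n) (Suc j) (degen G n i x) (degen G n i y)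
         else comp G (Suc n) j (degen G n i x) (degen G n i y))"
  using A[THEN conjunct2, THEN conjunct2, THEN conjunct2, THEN conjunct2, THEN conjunct2, THEN conjunct2, THEN conjunct2, THEN conjunct2, THEN conjunct2, THEN conjunct2, THEN conjunct2, THEN conjunct2, THEN conjunct2, THEN conjunct2, THEN conjunct1] by blast
lemma conn_comp: "composable G n j x y \<Longrightarrow> 1 \<le> i \<Longrightarrow> i \<le> n \<Longrightarrow> i \<noteq> j \<Longrightarrow>
      conn G n i a (comp G n j x y) =
        (if i < j then comp G (Suc n) (Suc j) (conn G n i a x) (conn G n i a y)
         else comp G (Suc n) j (conn G n i a x) (conn G n i a y))"
  using A[THEN conjunct2, THEN conjunct2, THEN conjunct2, THEN conjunct2, THEN conjunct2, THEN conjunct2, THEN conjunct2, THEN conjunct2, THEN conjunct2, THEN conjunct2, THEN conjunct2, THEN conjunct2, THEN conjunct2, THEN conjunct2, THEN conjunct2, THEN conjunct1] by blast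
lemma conn_comp_same: "composable G n j x y \<Longrightarrow>
      conn G n j True (comp G n j x y) =
        comp G (Suc n) (Suc j)
          (comp G (Suc n) j (conn G n j True x) (degen G n j x))
          (comp G (Suc n) j (degen G n (Suc j) x) (conn G n j True y)) \<and>
      conn G n j False (comp G n j x y) =
        comp G (Suc n) (Suc j)
          (comp G (Suc n) j (conn G n j False x) (degen G n (Suc j) y))
          (comp G (Suc n) j (degen G n j y) (conn G n j False y))"
  using A[THEN conjunct2, THEN conjunct2, THEN conjunct2, THEN conjunct2, THEN conjunct2, THEN conjunct2, THEN conjunct2, THEN conjunct2, THEN conjunct2, THEN conjunct2, THEN conjunct2, THEN conjunct2, THEN conjunct2, THEN conjunct2, THEN conjunct2, THEN conjunct2, THEN conjunct1] by blast
lemma assoc: "composable G n j x y \<Longrightarrow> composable G n j y z \<Longrightarrow>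
      comp G n j (comp G n j x y) z = comp G n j x (comp G n j y z)"
  using A[THEN conjunct2, THEN conjunct2, THEN conjunct2, THEN conjunct2, THEN conjunct2, THEN conjunct2, THEN conjunct2, THEN conjunct2, THEN conjunct2, THEN conjunct2, THEN conjunct2, THEN conjunct2, THEN conjunct2, THEN conjunct2, THEN conjunct2, THEN conjunct2, THEN conjunct2, THEN conjunct1] by blast
lemma units: "x \<in> cell G n \<Longrightarrow> 1 \<le> j \<Longrightarrow> j \<le> n \<Longrightarrow>
      comp G n j (degen G (n - 1) j (face G n j False x)) x = x \<and>
      comp G n j x (degen G (n - 1) j (face G n j True x)) = x"
  using A[THEN conjunct2, THEN conjunct2, THEN conjunct2, THEN conjunct2, THEN conjunct2, THEN conjunct2, THEN conjunct2, THEN conjunct2, THEN conjunct2, THEN conjunct2, THEN conjunct2, THEN conjunct2, THEN conjunct2, THEN conjunct2, THEN conjunct2, THEN conjunct2, THEN conjunct2, THEN conjunct2, THEN conjunct1] by blast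
lemma cancel: "x \<in> cell G n \<Longrightarrow> 1 \<le> i \<Longrightarrow> i \<le> n \<Longrightarrow>
      comp G (Suc n) i (conn G n i True x) (conn G n i False x) = degen G n (Suc i) x \<and>
      comp G (Suc n) (Suc i) (conn G n i True x) (conn G n i False x) = degen G n i x"
  using A[THEN conjunct2, THEN conjunct2, THEN conjunct2, THEN conjunct2, THEN conjunct2, THEN conjunct2, THEN conjunct2, THEN conjunct2, THEN conjunct2, THEN conjunct2, THEN conjunct2, THEN conjunct2, THEN conjunct2, THEN conjunct2, THEN conjunct2, THEN conjunct2, THEN conjunct2, THEN conjunct2, THEN conjunct2] by blast



lemma face_cell_S[simp]: "x \<in> cell G (Suc n) \<Longrightarrow> 1 \<le> i \<Longrightarrow> i \<le> Suc n \<Longrightarrow> face G (Suc n) i a x \<in> cell G n"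
  using face_cell[of x "Suc n" i a] by simp

lemma face_face_S: "x \<in> cell G (Suc (Suc n)) \<Longrightarrow> 1 \<le> i \<Longrightarrow> i < j \<Longrightarrow> j \<le> Suc (Suc n) \<Longrightarrow>
      face G (Suc n) i a (face G (Suc (Suc n)) j b x) = face G (Suc n) (j - 1) b (face G (Suc (Suc n)) i a x)"
  using face_face[of x "Suc (Suc n)" i j a b] by simp

lemma face_degen_S: "x \<in> cell G (Suc n) \<Longrightarrow> 1 \<le> i \<Longrightarrow> i \<le> Suc (Suc n) \<Longrightarrow> 1 \<le> j \<Longrightarrow> j \<le> Suc (Suc n) \<Longrightarrow>
      face G (Suc (Suc n)) i a (degen G (Suc n) j x) =
        (if i < j then degen G n (j - 1) (face G (Suc n) i a x)
         else if j < i then degen G n j (face G (Suc n) (i - 1) a x)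
         else x)"
  using face_degen[of x "Suc n" i j a] by simp

lemma face_degen_same[simp]: "x \<in> cell G n \<Longrightarrow> 1 \<le> j \<Longrightarrow> j \<le> Suc n \<Longrightarrow>
      face G (Suc n) j a (degen G n j x) = x"
  using face_degen[of x n j j a] by simp

lemma face_conn_S: "x \<in> cell G (Suc n) \<Longrightarrow> 1 \<le> j \<Longrightarrow> j \<le> Suc n \<Longrightarrow> 1 \<le> i \<Longrightarrow> i \<le> Suc (Suc n) \<Longrightarrow>
      face G (Suc (Suc n)) i a (conn G (Suc n) j b x) =
        (if i < j then conn G n (j - 1) b (face G (Suc n) i a x)
         else if Suc j < i then conn G n j b (face G (Suc n) (i - 1) a x)
         else if a = b then x
         else degen G n j (face G (Suc n) j a x))"
  using face_conn[of x "Suc n" j i a b] by simp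

lemma face_conn_same1[simp]: "x \<in> cell G n \<Longrightarrow> 1 \<le> j \<Longrightarrow> j \<le> n \<Longrightarrow>
      face G (Suc n) j a (conn G n j a x) = x"
  using face_conn[of x n j j a a] by simp
lemma face_conn_same2[simp]: "x \<in> cell G n \<Longrightarrow> 1 \<le> j \<Longrightarrow> j \<le> n \<Longrightarrow>
      face G (Suc n) (Suc j) a (conn G n j a x) = x"
  using face_conn[of x n j "Suc j" a a] by simp

lemma composable_iff: "composable G n j x y \<longleftrightarrow> x \<in> cell G n \<and> y \<in> cell G n \<and> 1 \<le> j \<and> j \<le> n
     \<and> face G n j True x = face G n j False y"
  by (simp add: composable_def)

lemma face_comp_F[simp]: "composable G n j x y \<Longrightarrow> face G n j False (comp G n j x y) = face G n j False x"
  using face_comp_same by blast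
lemma face_comp_T[simp]: "composable G n j x y \<Longrightarrow> face G n j True (comp G n j x y) = face G n j True y"
  using face_comp_same by blast

lemma face_comp_S: "composable G (Suc n) j x y \<Longrightarrow> 1 \<le> i \<Longrightarrow> i \<le> Suc n \<Longrightarrow> i \<noteq> j \<Longrightarrow>
      face G (Suc n) i a (comp G (Suc n) j x y) =
        (if i < j then comp G n (j - 1) (face G (Suc n) i a x) (face G (Suc n) i a y)
         else comp G n j (face G (Suc n) i a x) (face G (Suc n) i a y))"
  using face_comp[of "Suc n" j x y i a] by simp

lemmas cs = face_cell_S degen_cell conn_cell comp_cell composable_iff face_face_S face_degen_S
  face_conn_S face_comp_S

lemma unitL: "x \<in> cell G (Suc n) \<Longrightarrow> 1 \<le> j \<Longrightarrow> j \<le> Suc n \<Longrightarrow> y = face G (Suc n) j False x \<Longrightarrow>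
      comp G (Suc n) j (degen G n j y) x = x"
  using units[of x "Suc n" j] by simp
lemma unitR: "x \<in> cell G (Suc n) \<Longrightarrow> 1 \<le> j \<Longrightarrow> j \<le> Suc n \<Longrightarrow> y = face G (Suc n) j True x \<Longrightarrow>
      comp G (Suc n) j x (degen G n j y) = x"
  using units[of x "Suc n" j] by simp

lemma psi_S: "psi G (Suc n) i x = comp G (Suc n) (Suc i)
       (comp G (Suc n) (Suc i) (conn G n i True (face G (Suc n) (Suc i) False x)) x)
       (conn G n i False (face G (Suc n) (Suc i) True x))"
  by (simp add: psi_def)

lemma psi_cell[simp]: "x \<in> cell G (Suc n) \<Longrightarrow> 1 \<le> i \<Longrightarrow> i \<le> n \<Longrightarrow> psi G (Suc n) i x \<in> cell G (Suc n)"
  unfolding psi_S by (simp add: cs)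

lemma psi_face_F: "x \<in> cell G (Suc (Suc m)) \<Longrightarrow> 1 \<le> i \<Longrightarrow> i \<le> Suc m \<Longrightarrow>
   face G (Suc (Suc m)) (Suc i) False (psi G (Suc (Suc m)) i x) =
   degen G m i (face G (Suc m) i False (face G (Suc (Suc m)) (Suc i) False x))"
  unfolding psi_S by (simp add: cs)

lemma psi_face_T: "x \<in> cell G (Suc (Suc m)) \<Longrightarrow> 1 \<le> i \<Longrightarrow> i \<le> Suc m \<Longrightarrow>
   face G (Suc (Suc m)) (Suc i) True (psi G (Suc (Suc m)) i x) =
   degen G m i (face G (Suc m) i True (face G (Suc (Suc m)) (Suc i) True x))"
  unfolding psi_S by (simp add: cs)



lemma conn_degen_same: "x \<in> cell G n \<Longrightarrow> 1 \<le> j \<Longrightarrow> j \<le> Suc n \<Longrightarrow>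
   conn G (Suc n) j a (degen G n j x) = degen G (Suc n) (Suc j) (degen G n j x)"
  using conn_degen[of x n j j a] by simp

lemma psi_idem: assumes x: "x \<in> cell G (Suc (Suc m))" and i: "1 \<le> i" "i \<le> Suc m"
  shows "psi G (Suc (Suc m)) i (psi G (Suc (Suc m)) i x) = psi G (Suc (Suc m)) i x"
proof -
  let ?y = "psi G (Suc (Suc m)) i x"
  have y: "?y \<in> cell G (Suc (Suc m))" using x i by simp
  have h1: "conn G (Suc m) i True (face G (Suc (Suc m)) (Suc i) False ?y)
       = degen G (Suc m) (Suc i) (face G (Suc (Suc m)) (Suc i) False ?y)"
    unfolding psi_face_F[OF x i] by (rule conn_degen_same) (use x i in \<open>simp_all add: cs\<close>)
  have h2: "conn G (Suc m) i False (face G (Suc (Suc m)) (Suc i) True ?y)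
       = degen G (Suc m) (Suc i) (face G (Suc (Suc m)) (Suc i) True ?y)"
    unfolding psi_face_T[OF x i] by (rule conn_degen_same) (use x i in \<open>simp_all add: cs\<close>)
  show ?thesis
    apply (subst (1) psi_S)
    unfolding h1 h2
    apply (subst unitL[OF y]) using i apply simp_all
    apply (subst unitR[OF y]) using i apply simp_all
    done
qed

lemma psi_face_hi: assumes x: "x \<in> cell G (Suc (Suc m))" and i: "1 \<le> i" "Suc (Suc i) \<le> k" "k \<le> Suc (Suc m)"
  shows "face G (Suc (Suc m)) k a (psi G (Suc (Suc m)) i x) = psi G (Suc m) i (face G (Suc (Suc m)) k a x)"
  unfolding psi_S using x i by (simp add: cs)

lemma psi_dist: assumes uv: "composable G (Suc (Suc n)) (Suc k) u v" and i: "1 \<le> i" "Suc i \<le> k"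
  shows "psi G (Suc (Suc n)) i (comp G (Suc (Suc n)) (Suc k) u v) =
         comp G (Suc (Suc n)) (Suc k) (psi G (Suc (Suc n)) i u) (psi G (Suc (Suc n)) i v)"
proof -
  have u: "u \<in> cell G (Suc (Suc n))" and v: "v \<in> cell G (Suc (Suc n))" and k: "k \<le> Suc n"
    and e: "face G (Suc (Suc n)) (Suc k) True u = face G (Suc (Suc n)) (Suc k) False v"
    using uv by (auto simp: composable_iff)
  have hk: "face G (Suc n) k True (face G (Suc (Suc n)) (Suc i) a u) =
            face G (Suc n) k False (face G (Suc (Suc n)) (Suc i) a v)" for a
  proof -
    have "face G (Suc n) (Suc i) a (face G (Suc (Suc n)) (Suc k) True u) = face G (Suc n) (Suc i) a (face G (Suc (Suc n)) (Suc k) False v)"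
      using e by simp
    then show ?thesis using u v i k by (simp add: face_face_S)
  qed
  define p where "p a = face G (Suc (Suc n)) (Suc i) a u" for a
  define q where "q a = face G (Suc (Suc n)) (Suc i) a v" for a
  have pq: "composable G (Suc n) k (p a) (q a)" for a
    using hk[of a] u v i k by (simp add: cs p_def q_def)
  have fc: "face G (Suc (Suc n)) (Suc i) a (comp G (Suc (Suc n)) (Suc k) u v) = comp G (Suc n) k (p a) (q a)" for a
    using uv i k by (simp add: face_comp_S p_def q_def)
  have cc: "conn G (Suc n) i b (comp G (Suc n) k (p a) (q a)) = comp G (Suc (Suc n)) (Suc k) (conn G (Suc n) i b (p a)) (conn G (Suc n) i b (q a))" for a b
    using conn_comp[OF pq[of a], of i b] i k by simp
  have c1: "composable G (Suc (Suc n)) (Suc k) (conn G (Suc n) i b (p a)) (conn G (Suc n) i b (q a))" for a b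
    using pq[of a] i k by (simp add: cs)
  have c2: "composable G (Suc (Suc n)) (Suc i) (conn G (Suc n) i True (p False)) u"
    using u i k by (simp add: cs p_def)
  have c3: "composable G (Suc (Suc n)) (Suc i) (conn G (Suc n) i True (q False)) v"
    using v i k by (simp add: cs q_def)
  have c4: "composable G (Suc (Suc n)) (Suc i) (comp G (Suc (Suc n)) (Suc i) (conn G (Suc n) i True (p False)) u) (conn G (Suc n) i False (p True))"
    using c2 u i k by (simp add: cs p_def)
  have c5: "composable G (Suc (Suc n)) (Suc i) (comp G (Suc (Suc n)) (Suc i) (conn G (Suc n) i True (q False)) v) (conn G (Suc n) i False (q True))"
    using c3 v i k by (simp add: cs q_def)
  have i1: "comp G (Suc (Suc n)) (Suc i) (comp G (Suc (Suc n)) (Suc k) (conn G (Suc n) i True (p False)) (conn G (Suc n) i True (q False))) (comp G (Suc (Suc n)) (Suc k) u v)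
     = comp G (Suc (Suc n)) (Suc k) (comp G (Suc (Suc n)) (Suc i) (conn G (Suc n) i True (p False)) u) (comp G (Suc (Suc n)) (Suc i) (conn G (Suc n) i True (q False)) v)"
    by (rule interchange) (use c1 uv c2 c3 i in auto)
  have c6: "composable G (Suc (Suc n)) (Suc k) (comp G (Suc (Suc n)) (Suc i) (conn G (Suc n) i True (p False)) u) (comp G (Suc (Suc n)) (Suc i) (conn G (Suc n) i True (q False)) v)"
    using c2 c3 hk e u v i k by (simp add: cs p_def q_def)
  show ?thesis
    unfolding psi_S fc cc p_def[symmetric] q_def[symmetric] i1
    by (rule interchange) (use c1 c4 c5 c6 i in auto)
qed



lemma psi_conn_far: assumes c: "c \<in> cell G (Suc p)" and ab: "1 \<le> a" "Suc a \<le> b" "Suc b \<le> Suc p"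
  shows "psi G (Suc (Suc p)) a (conn G (Suc p) (Suc b) t c) = conn G (Suc p) (Suc b) t (psi G (Suc p) a c)"
proof -
  have f: "face G (Suc (Suc p)) (Suc a) al (conn G (Suc p) (Suc b) t c) = conn G p b t (face G (Suc p) (Suc a) al c)" for al
    using c ab by (simp add: cs)
  have g: "conn G (Suc p) a g (conn G p b t w) = conn G (Suc p) (Suc b) t (conn G p a g w)" if "w \<in> cell G p" for w g
    using conn_conn[OF that, of a b g t] ab by simp
  show ?thesis
    unfolding psi_S f using c ab by (simp add: cs g conn_comp)
qed

lemma psi_comm: assumes x: "x \<in> cell G (Suc (Suc p))" and ab: "1 \<le> a" "Suc (Suc a) \<le> b" "b \<le> Suc p"
  shows "psi G (Suc (Suc p)) a (psi G (Suc (Suc p)) b x) = psi G (Suc (Suc p)) b (psi G (Suc (Suc p)) a x)"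
proof -
  define c where "c t = face G (Suc (Suc p)) (Suc b) t x" for t
  have cc: "c t \<in> cell G (Suc p)" for t using x ab by (simp add: c_def)
  have 1: "psi G (Suc (Suc p)) b x = comp G (Suc (Suc p)) (Suc b) (comp G (Suc (Suc p)) (Suc b) (conn G (Suc p) b True (c False)) x) (conn G (Suc p) b False (c True))"
    by (simp add: psi_S c_def)
  have 2: "psi G (Suc (Suc p)) b (psi G (Suc (Suc p)) a x) = comp G (Suc (Suc p)) (Suc b) (comp G (Suc (Suc p)) (Suc b) (conn G (Suc p) b True (psi G (Suc p) a (c False))) (psi G (Suc (Suc p)) a x)) (conn G (Suc p) b False (psi G (Suc p) a (c True)))"
    using x ab by (simp add: psi_S[of _ b] c_def psi_face_hi)
  obtain b' where b': "b = Suc b'" using ab by (cases b) auto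
  have k1: "composable G (Suc (Suc p)) (Suc b) (conn G (Suc p) b True (c False)) x"
    using x ab by (simp add: cs c_def)
  have k2: "composable G (Suc (Suc p)) (Suc b) (comp G (Suc (Suc p)) (Suc b) (conn G (Suc p) b True (c False)) x) (conn G (Suc p) b False (c True))"
    using x ab k1 by (simp add: cs c_def)
  have pc: "psi G (Suc (Suc p)) a (conn G (Suc p) b t (c al)) = conn G (Suc p) b t (psi G (Suc p) a (c al))" for t al
    using psi_conn_far[OF cc[of al], of a b' t] ab b' by simp
  have ab2: "Suc a \<le> b" using ab by simp
  show ?thesis
    unfolding 1 2 psi_dist[OF k2 ab(1) ab2] psi_dist[OF k1 ab(1) ab2]
    using ab by (simp add: pc)
qed

lemma psi_degen_succ: assumes w: "w \<in> cell G (Suc m)" and j: "1 \<le> j" "j \<le> Suc m"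
  shows "psi G (Suc (Suc m)) j (degen G (Suc m) (Suc j) w) = degen G (Suc m) j w"
proof -
  have "comp G (Suc (Suc m)) (Suc j) (conn G (Suc m) j True w) (degen G (Suc m) (Suc j) w) = conn G (Suc m) j True w"
    by (rule unitR) (use w j in \<open>simp_all add: cs\<close>)
  then show ?thesis unfolding psi_S using w j cancel[OF w j] by simp
qed

lemma psi_degen_same: assumes w: "w \<in> cell G (Suc m)" and j: "1 \<le> j" "j \<le> Suc m"
  shows "psi G (Suc (Suc m)) j (degen G (Suc m) j w) = degen G (Suc m) j w"
proof -
  have f: "face G (Suc (Suc m)) (Suc j) al (degen G (Suc m) j w) = degen G m j (face G (Suc m) j al w)" for al
    using w j by (simp add: cs)
  have g: "conn G (Suc m) j al (face G (Suc (Suc m)) (Suc j) al' (degen G (Suc m) j w)) = degen G (Suc m) (Suc j) (face G (Suc (Suc m)) (Suc j) al' (degen G (Suc m) j w))" for al al'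
    unfolding f using w j by (simp add: conn_degen_same)
  have d: "degen G (Suc m) j w \<in> cell G (Suc (Suc m))" using w j by (simp add: cs)
  have 1: "comp G (Suc (Suc m)) (Suc j) (degen G (Suc m) (Suc j) (face G (Suc (Suc m)) (Suc j) False (degen G (Suc m) j w))) (degen G (Suc m) j w) = degen G (Suc m) j w"
    by (rule unitL[OF d]) (use j in simp_all)
  have 2: "comp G (Suc (Suc m)) (Suc j) (degen G (Suc m) j w) (degen G (Suc m) (Suc j) (face G (Suc (Suc m)) (Suc j) True (degen G (Suc m) j w))) = degen G (Suc m) j w"
    by (rule unitR[OF d]) (use j in simp_all)
  show ?thesis unfolding psi_S g 1 2 ..
qed

lemma psi_conn_same: assumes w: "w \<in> cell G (Suc m)" and j: "1 \<le> j" "j \<le> Suc m"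
  shows "psi G (Suc (Suc m)) j (conn G (Suc m) j True w) = degen G (Suc m) j w"
proof -
  have f: "face G (Suc (Suc m)) (Suc j) False (conn G (Suc m) j True w) = degen G m j (face G (Suc m) j False w)"
    using w j by (simp add: cs)
  have g: "conn G (Suc m) j True (face G (Suc (Suc m)) (Suc j) False (conn G (Suc m) j True w)) = degen G (Suc m) (Suc j) (face G (Suc (Suc m)) (Suc j) False (conn G (Suc m) j True w))"
    unfolding f using w j by (simp add: conn_degen_same)
  have d: "conn G (Suc m) j True w \<in> cell G (Suc (Suc m))" using w j by (simp add: cs)
  have 1: "comp G (Suc (Suc m)) (Suc j) (degen G (Suc m) (Suc j) (face G (Suc (Suc m)) (Suc j) False (conn G (Suc m) j True w))) (conn G (Suc m) j True w) = conn G (Suc m) j True w"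
    by (rule unitL[OF d]) (use j in simp_all)
  show ?thesis unfolding psi_S g 1 using w j cancel[OF w j] by simp
qed



lemma psi_composable: assumes uv: "composable G (Suc (Suc n)) (Suc k) u v" and i: "1 \<le> i" "Suc i \<le> k"
  shows "composable G (Suc (Suc n)) (Suc k) (psi G (Suc (Suc n)) i u) (psi G (Suc (Suc n)) i v)"
proof -
  have u: "u \<in> cell G (Suc (Suc n))" and v: "v \<in> cell G (Suc (Suc n))" and k: "k \<le> Suc n"
    and e: "face G (Suc (Suc n)) (Suc k) True u = face G (Suc (Suc n)) (Suc k) False v"
    using uv by (auto simp: composable_iff)
  show ?thesis unfolding composable_iff
    using u v k i psi_face_hi[OF u, of i "Suc k" True] psi_face_hi[OF v, of i "Suc k" False] e by simp
qed

definition R where "R n j v = comp G (Suc n) (Suc j) (conn G n (Suc j) True v) (conn G n j False v)"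
definition lam where "lam n j u = comp G n (Suc j) (conn G (n - 1) j True (face G n (Suc j) False u)) u"

lemma lam_id: assumes u: "u \<in> cell G (Suc (Suc p))" and j: "1 \<le> j" "j \<le> Suc p" and g: "g \<in> cell G p"
   and f: "face G (Suc (Suc p)) (Suc j) False u = degen G p j g"
  shows "lam (Suc (Suc p)) j u = u"
proof -
  have "conn G (Suc p) j True (face G (Suc (Suc p)) (Suc j) False u) = degen G (Suc p) (Suc j) (face G (Suc (Suc p)) (Suc j) False u)"
    unfolding f using g j by (simp add: conn_degen_same)
  then show ?thesis unfolding lam_def using unitL[OF u, of "Suc j"] j by simp
qed

lemma R_cell: "v \<in> cell G (Suc (Suc p)) \<Longrightarrow> 1 \<le> j \<Longrightarrow> j \<le> Suc p \<Longrightarrow> R (Suc (Suc p)) j v \<in> cell G (Suc (Suc (Suc p)))"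
  unfolding R_def by (simp add: cs)

lemma F_expand: assumes v: "v \<in> cell G (Suc (Suc p))" and j: "1 \<le> j" "j \<le> Suc p"
  shows "psi G (Suc (Suc (Suc p))) j (conn G (Suc (Suc p)) (Suc j) True v) =
    comp G (Suc (Suc (Suc p))) (Suc j) (degen G (Suc (Suc p)) (Suc (Suc j)) (conn G (Suc p) j True (face G (Suc (Suc p)) (Suc j) False v))) (R (Suc (Suc p)) j v)"
proof -
  have f: "face G (Suc (Suc (Suc p))) (Suc j) False (conn G (Suc (Suc p)) (Suc j) True v) = degen G (Suc p) (Suc j) (face G (Suc (Suc p)) (Suc j) False v)"
    using v j by (simp add: cs)
  have g: "conn G (Suc (Suc p)) j True (degen G (Suc p) (Suc j) (face G (Suc (Suc p)) (Suc j) False v)) = degen G (Suc (Suc p)) (Suc (Suc j)) (conn G (Suc p) j True (face G (Suc (Suc p)) (Suc j) False v))"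
    using conn_degen[of "face G (Suc (Suc p)) (Suc j) False v" "Suc p" j "Suc j" True] v j by simp
  have h: "face G (Suc (Suc (Suc p))) (Suc j) True (conn G (Suc (Suc p)) (Suc j) True v) = v"
    using v j by simp
  show ?thesis unfolding psi_S f g h R_def
    by (rule assoc) (use v j in \<open>simp_all add: cs\<close>)
qed



lemma F_comp: assumes uv: "composable G (Suc (Suc p)) (Suc j) u v" and j: "1 \<le> j" "j \<le> Suc p"
  shows "psi G (Suc (Suc (Suc p))) j (conn G (Suc (Suc p)) (Suc j) True (comp G (Suc (Suc p)) (Suc j) u v)) =
    comp G (Suc (Suc (Suc p))) (Suc (Suc j)) (psi G (Suc (Suc (Suc p))) j (conn G (Suc (Suc p)) (Suc j) True u))
      (comp G (Suc (Suc (Suc p))) (Suc j) (degen G (Suc (Suc p)) (Suc (Suc j)) (lam (Suc (Suc p)) j u)) (R (Suc (Suc p)) j v))"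
proof -
  have u: "u \<in> cell G (Suc (Suc p))" and v: "v \<in> cell G (Suc (Suc p))"
    and e: "face G (Suc (Suc p)) (Suc j) True u = face G (Suc (Suc p)) (Suc j) False v"
    using uv by (auto simp: composable_iff)
  define D where "D = degen G (Suc (Suc p)) (Suc (Suc j)) u"
  define Cv where "Cv = conn G (Suc (Suc p)) (Suc j) True v"
  define X where "X = comp G (Suc (Suc (Suc p))) (Suc j) D Cv"
  define z where "z = face G (Suc (Suc p)) (Suc j) False u"
  define Gz where "Gz = conn G (Suc p) j True z"
  have a1: "conn G (Suc (Suc p)) (Suc j) True (comp G (Suc (Suc p)) (Suc j) u v) =
     comp G (Suc (Suc (Suc p))) (Suc (Suc j)) (comp G (Suc (Suc (Suc p))) (Suc j) (conn G (Suc (Suc p)) (Suc j) True u) (degen G (Suc (Suc p)) (Suc j) u)) X"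
    using conn_comp_same[OF uv] unfolding X_def D_def Cv_def by blast
  have a2: "comp G (Suc (Suc (Suc p))) (Suc j) (conn G (Suc (Suc p)) (Suc j) True u) (degen G (Suc (Suc p)) (Suc j) u) = conn G (Suc (Suc p)) (Suc j) True u"
    by (rule unitR) (use u j in \<open>simp_all add: cs\<close>)
  have ur: "comp G (Suc (Suc p)) (Suc j) u (degen G (Suc p) (Suc j) (face G (Suc (Suc p)) (Suc j) False v)) = u"
    by (rule unitR[OF u]) (use j e in simp_all)
  have k1: "composable G (Suc (Suc (Suc p))) (Suc j) D Cv"
    unfolding D_def Cv_def using u v j e by (simp add: cs)
  have k2: "composable G (Suc (Suc (Suc p))) (Suc (Suc j)) (conn G (Suc (Suc p)) (Suc j) True u) X"
    using k1 u v j ur unfolding X_def D_def Cv_def by (simp add: cs)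
  have b: "psi G (Suc (Suc (Suc p))) j (conn G (Suc (Suc p)) (Suc j) True (comp G (Suc (Suc p)) (Suc j) u v)) =
     comp G (Suc (Suc (Suc p))) (Suc (Suc j)) (psi G (Suc (Suc (Suc p))) j (conn G (Suc (Suc p)) (Suc j) True u)) (psi G (Suc (Suc (Suc p))) j X)"
    unfolding a1 a2 using psi_dist[OF k2 j(1)] by simp
  have fx1: "face G (Suc (Suc (Suc p))) (Suc j) False X = degen G (Suc p) (Suc j) z"
    using k1 u j unfolding X_def D_def z_def by (simp add: cs)
  have fx2: "face G (Suc (Suc (Suc p))) (Suc j) True X = v"
    using k1 v j unfolding X_def Cv_def by (simp add: cs)
  have cg: "conn G (Suc (Suc p)) j True (degen G (Suc p) (Suc j) z) = degen G (Suc (Suc p)) (Suc (Suc j)) Gz"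
    using conn_degen[of z "Suc p" j "Suc j" True] u j unfolding Gz_def z_def by simp
  have k3: "composable G (Suc (Suc (Suc p))) (Suc j) (degen G (Suc (Suc p)) (Suc (Suc j)) Gz) D"
    unfolding Gz_def D_def z_def using u j by (simp add: cs)
  have k4: "composable G (Suc (Suc (Suc p))) (Suc j) Cv (conn G (Suc (Suc p)) j False v)"
    unfolding Cv_def using v j by (simp add: cs)
  have k5: "composable G (Suc (Suc p)) (Suc j) Gz u"
    unfolding Gz_def z_def using u j by (simp add: cs)
  have k6: "composable G (Suc (Suc (Suc p))) (Suc j) (comp G (Suc (Suc (Suc p))) (Suc j) (degen G (Suc (Suc p)) (Suc (Suc j)) Gz) D) Cv"
    using k1 k3 by (simp add: cs)
  have c: "psi G (Suc (Suc (Suc p))) j X = comp G (Suc (Suc (Suc p))) (Suc j) (degen G (Suc (Suc p)) (Suc (Suc j)) (lam (Suc (Suc p)) j u)) (R (Suc (Suc p)) j v)"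
  proof -
    have "psi G (Suc (Suc (Suc p))) j X = comp G (Suc (Suc (Suc p))) (Suc j) (comp G (Suc (Suc (Suc p))) (Suc j) (degen G (Suc (Suc p)) (Suc (Suc j)) Gz) X) (conn G (Suc (Suc p)) j False v)"
      unfolding psi_S fx1 fx2 cg by simp
    also have "\<dots> = comp G (Suc (Suc (Suc p))) (Suc j) (comp G (Suc (Suc (Suc p))) (Suc j) (comp G (Suc (Suc (Suc p))) (Suc j) (degen G (Suc (Suc p)) (Suc (Suc j)) Gz) D) Cv) (conn G (Suc (Suc p)) j False v)"
      unfolding X_def using assoc[OF k3 k1] by simp
    also have "\<dots> = comp G (Suc (Suc (Suc p))) (Suc j) (comp G (Suc (Suc (Suc p))) (Suc j) (degen G (Suc (Suc p)) (Suc (Suc j)) Gz) D) (comp G (Suc (Suc (Suc p))) (Suc j) Cv (conn G (Suc (Suc p)) j False v))"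
      using assoc[OF k6 k4] by simp
    also have "comp G (Suc (Suc (Suc p))) (Suc j) (degen G (Suc (Suc p)) (Suc (Suc j)) Gz) D = degen G (Suc (Suc p)) (Suc (Suc j)) (lam (Suc (Suc p)) j u)"
      unfolding lam_def D_def using degen_comp[OF k5, of "Suc (Suc j)"] j unfolding Gz_def z_def by simp
    finally show ?thesis unfolding R_def Cv_def .
  qed
  show ?thesis unfolding b c ..
qed



lemma Wplus: assumes c: "c \<in> cell G (Suc (Suc p))" and j: "1 \<le> j" "j \<le> Suc p"
  shows "psi G (Suc (Suc (Suc p))) j (conn G (Suc (Suc p)) (Suc j) True (psi G (Suc (Suc p)) j c)) =
    comp G (Suc (Suc (Suc p))) (Suc (Suc j)) (degen G (Suc (Suc p)) j (conn G (Suc p) j True (face G (Suc (Suc p)) (Suc j) False c)))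
      (psi G (Suc (Suc (Suc p))) j (conn G (Suc (Suc p)) (Suc j) True c))"
proof -
  define e where "e = face G (Suc (Suc p)) (Suc j) False c"
  define f where "f = face G (Suc (Suc p)) (Suc j) True c"
  define L where "L = comp G (Suc (Suc p)) (Suc j) (conn G (Suc p) j True e) c"
  define w where "w = conn G (Suc p) j False f"
  have ec: "e \<in> cell G (Suc p)" "f \<in> cell G (Suc p)" using c j by (simp_all add: e_def f_def)
  have kL: "composable G (Suc (Suc p)) (Suc j) (conn G (Suc p) j True e) c"
    using c j ec by (simp add: cs e_def)
  have kLw: "composable G (Suc (Suc p)) (Suc j) L w"
    using kL c j ec unfolding L_def w_def by (simp add: cs f_def)
  have Lc: "L \<in> cell G (Suc (Suc p))" "w \<in> cell G (Suc (Suc p))" using kLw by (auto simp: composable_iff)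
  have psic: "psi G (Suc (Suc p)) j c = comp G (Suc (Suc p)) (Suc j) L w"
    by (simp add: psi_S L_def w_def e_def f_def)
  have fL: "face G (Suc (Suc p)) (Suc j) False L = degen G p j (face G (Suc p) j False e)"
    unfolding L_def using kL ec j by (simp add: cs)
  have lamL: "lam (Suc (Suc p)) j L = L"
    by (rule lam_id[OF Lc(1) j _ fL]) (use ec j in simp)
  have fG: "face G (Suc (Suc p)) (Suc j) False (conn G (Suc p) j True e) = degen G p j (face G (Suc p) j False e)"
    using ec j by (simp add: cs)
  have lamG: "lam (Suc (Suc p)) j (conn G (Suc p) j True e) = conn G (Suc p) j True e"
    by (rule lam_id[OF _ j _ fG]) (use ec j in \<open>simp_all add: cs\<close>)
  have Rw: "R (Suc (Suc p)) j w = degen G (Suc (Suc p)) (Suc (Suc j)) w"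
  proof -
    have "conn G (Suc (Suc p)) j False w = conn G (Suc (Suc p)) (Suc j) False w"
      unfolding w_def using conn_conn_same[OF ec(2) j(1), of False] j by simp
    then show ?thesis unfolding R_def using cancel[OF Lc(2), of "Suc j"] j by simp
  qed
  have step1: "comp G (Suc (Suc (Suc p))) (Suc j) (degen G (Suc (Suc p)) (Suc (Suc j)) (lam (Suc (Suc p)) j L)) (R (Suc (Suc p)) j w)
      = degen G (Suc (Suc p)) (Suc (Suc j)) (psi G (Suc (Suc p)) j c)"
    unfolding lamL Rw psic using degen_comp[OF kLw, of "Suc (Suc j)"] j by simp
  have psiL: "psi G (Suc (Suc p)) j L = psi G (Suc (Suc p)) j c"
  proof -
    have "face G (Suc (Suc p)) (Suc j) True L = f" unfolding L_def using kL by (simp add: f_def)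
    then have "psi G (Suc (Suc p)) j L = comp G (Suc (Suc p)) (Suc j) L w"
      using lamL unfolding psi_S lam_def w_def by simp
    then show ?thesis using psic by simp
  qed
  have FLc: "psi G (Suc (Suc (Suc p))) j (conn G (Suc (Suc p)) (Suc j) True L) \<in> cell G (Suc (Suc (Suc p)))"
    using Lc j by (simp add: cs)
  have faceFL: "face G (Suc (Suc (Suc p))) (Suc (Suc j)) True (psi G (Suc (Suc (Suc p))) j (conn G (Suc (Suc p)) (Suc j) True L)) = psi G (Suc (Suc p)) j c"
    using psi_face_hi[of "conn G (Suc (Suc p)) (Suc j) True L" "Suc p" j "Suc (Suc j)" True] Lc j psiL by (simp add: cs)
  have FpsiC: "psi G (Suc (Suc (Suc p))) j (conn G (Suc (Suc p)) (Suc j) True (psi G (Suc (Suc p)) j c))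
       = psi G (Suc (Suc (Suc p))) j (conn G (Suc (Suc p)) (Suc j) True L)"
    unfolding psic F_comp[OF kLw j] step1
    by (rule unitR[OF FLc]) (use j faceFL psic in simp_all)
  have FG: "psi G (Suc (Suc (Suc p))) j (conn G (Suc (Suc p)) (Suc j) True (conn G (Suc p) j True e)) = degen G (Suc (Suc p)) j (conn G (Suc p) j True e)"
  proof -
    have "conn G (Suc (Suc p)) (Suc j) True (conn G (Suc p) j True e) = conn G (Suc (Suc p)) j True (conn G (Suc p) j True e)"
      using conn_conn_same[OF ec(1) j(1), of True] j by simp
    then show ?thesis using psi_conn_same[of "conn G (Suc p) j True e" "Suc p" j] ec j by (simp add: cs)
  qed
  have Fc: "psi G (Suc (Suc (Suc p))) j (conn G (Suc (Suc p)) (Suc j) True c) =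
      comp G (Suc (Suc (Suc p))) (Suc j) (degen G (Suc (Suc p)) (Suc (Suc j)) (conn G (Suc p) j True e)) (R (Suc (Suc p)) j c)"
    using F_expand[OF c j] by (simp add: e_def)
  have "psi G (Suc (Suc (Suc p))) j (conn G (Suc (Suc p)) (Suc j) True L) =
    comp G (Suc (Suc (Suc p))) (Suc (Suc j)) (degen G (Suc (Suc p)) j (conn G (Suc p) j True e))
      (psi G (Suc (Suc (Suc p))) j (conn G (Suc (Suc p)) (Suc j) True c))"
    unfolding L_def F_comp[OF kL j] FG lamG Fc ..
  then show ?thesis using FpsiC by (simp add: e_def)
qed

end


definition dual :: "'a cubcat \<Rightarrow> 'a cubcat" where
  "dual G = G(| face := (\<lambda>n i a x. face G n i (\<not> a) x), conn := (\<lambda>n i a x. conn G n i (\<not> a) x),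
     comp := (\<lambda>n j x y. comp G n j y x) |)"

lemma dual_simps[simp]: "cell (dual G) = cell G" "face (dual G) n i a x = face G n i (\<not> a) x"
  "degen (dual G) = degen G" "conn (dual G) n i a x = conn G n i (\<not> a) x" "comp (dual G) n j x y = comp G n j y x"
  by (simp_all add: dual_def)

lemma composable_dual[simp]: "composable (dual G) n j x y = composable G n j y x"
  by (auto simp: composable_def)

context cc begin

lemma dual_ax: "cubical_omega_cat_conn (dual G)"
  unfolding cubical_omega_cat_conn_def composable_dual dual_simps
  apply (intro conjI allI impI)
  subgoal using face_cell by blast
  subgoal using degen_cell by blast
  subgoal using conn_cell by blast
  subgoal using comp_cell by blast
  subgoal using face_face by blast
  subgoal using degen_degen by blast
  subgoal using face_degen by blast
  subgoal using conn_conn by blast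
  subgoal using conn_conn_same by blast
  subgoal using conn_degen by blast
  subgoal for n i j a b x using face_conn[of x n j i "\<not> a" "\<not> b"] by simp
  subgoal by simp
  subgoal by simp
  subgoal using face_comp by blast
  subgoal for n i j x y z w using interchange[of i j n w z y x] by blast
  subgoal using degen_comp by blast
  subgoal using conn_comp by blast
  subgoal for n j x y using conn_comp_same[of n j y x] by simp
  subgoal for n j x y using conn_comp_same[of n j y x] by simp
  subgoal for n j x y z using assoc[of n j z y x] by simp
  subgoal using units by simp
  subgoal using units by simp
  subgoal using cancel by simp
  subgoal using cancel by simp
  done

lemma psi_dual: assumes x: "x \<in> cell G (Suc n)" and i: "1 \<le> i" "i \<le> n"
  shows "psi (dual G) (Suc n) i x = psi G (Suc n) i x"
  unfolding psi_def using x i by (simp add: cs assoc)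

lemma Wminus: assumes c: "c \<in> cell G (Suc (Suc p))" and j: "1 \<le> j" "j \<le> Suc p"
  shows "psi G (Suc (Suc (Suc p))) j (conn G (Suc (Suc p)) (Suc j) False (psi G (Suc (Suc p)) j c)) =
    comp G (Suc (Suc (Suc p))) (Suc (Suc j)) (psi G (Suc (Suc (Suc p))) j (conn G (Suc (Suc p)) (Suc j) False c))
      (degen G (Suc (Suc p)) j (conn G (Suc p) j False (face G (Suc (Suc p)) (Suc j) True c)))"
proof -
  interpret D: cc "dual G" by (rule cc.intro, rule dual_ax)
  show ?thesis using D.Wplus[of c p j] c j by (simp add: psi_dual cs)
qed


lemma compL: "composable G n j x y \<Longrightarrow> composable G n j y z \<Longrightarrow> composable G n j (comp G n j x y) z"
  using comp_cell[of n j x y] by (auto simp: composable_iff)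
lemma compR: "composable G n j x y \<Longrightarrow> composable G n j y z \<Longrightarrow> composable G n j x (comp G n j y z)"
  using comp_cell[of n j y z] by (auto simp: composable_iff)

lemma W: assumes x: "x \<in> cell G (Suc (Suc (Suc p)))" and j: "1 \<le> j" "j \<le> Suc p"
  shows "psi G (Suc (Suc (Suc p))) j (psi G (Suc (Suc (Suc p))) (Suc j) (psi G (Suc (Suc (Suc p))) j (psi G (Suc (Suc (Suc p))) (Suc j) x)))
       = psi G (Suc (Suc (Suc p))) j (psi G (Suc (Suc (Suc p))) (Suc j) (psi G (Suc (Suc (Suc p))) j x))"
proof -
  let ?N = "Suc (Suc (Suc p))" and ?M = "Suc (Suc p)"
  define c where "c = face G ?N (Suc (Suc j)) False x"
  define d where "d = face G ?N (Suc (Suc j)) True x"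
  define X where "X = psi G ?N j x"
  define A where "A = psi G ?N j (conn G ?M (Suc j) True c)"
  define B where "B = psi G ?N j (conn G ?M (Suc j) False d)"
  define e where "e = face G ?M (Suc j) False c"
  define e' where "e' = face G ?M (Suc j) True d"
  define P where "P = degen G ?M j (conn G (Suc p) j True e)"
  define Q where "Q = degen G ?M j (conn G (Suc p) j False e')"
  have cd: "c \<in> cell G ?M" "d \<in> cell G ?M" using x j by (simp_all add: c_def d_def)
  have ee: "e \<in> cell G (Suc p)" "e' \<in> cell G (Suc p)" using cd j by (simp_all add: e_def e'_def)
  have k1: "composable G ?N (Suc (Suc j)) (conn G ?M (Suc j) True c) x"
    using x j cd by (simp add: cs c_def)
  have k2: "composable G ?N (Suc (Suc j)) (comp G ?N (Suc (Suc j)) (conn G ?M (Suc j) True c) x) (conn G ?M (Suc j) False d)"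
    using k1 x j cd by (simp add: cs d_def)
  have j2: "Suc j \<le> Suc j" by simp
  have py: "psi G ?N j (psi G ?N (Suc j) x) = comp G ?N (Suc (Suc j)) (comp G ?N (Suc (Suc j)) A X) B"
    unfolding psi_S[of _ "Suc j"] c_def[symmetric] d_def[symmetric] psi_dist[OF k2 j(1) j2] psi_dist[OF k1 j(1) j2]
    A_def B_def X_def by simp
  define Y where "Y = psi G ?N j (psi G ?N (Suc j) x)"
  have Yc: "Y \<in> cell G ?N" using x j by (simp add: Y_def)
  have fY1: "face G ?N (Suc (Suc j)) False Y = degen G (Suc p) j e"
    unfolding Y_def using x j psi_face_hi[of "psi G ?N (Suc j) x" "Suc p" j "Suc (Suc j)" False]
      psi_face_F[OF x, of "Suc j"] psi_degen_succ[OF ee(1), of j] by (simp add: e_def c_def)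
  have fY2: "face G ?N (Suc (Suc j)) True Y = degen G (Suc p) j e'"
    unfolding Y_def using x j psi_face_hi[of "psi G ?N (Suc j) x" "Suc p" j "Suc (Suc j)" True]
      psi_face_T[OF x, of "Suc j"] psi_degen_succ[OF ee(2), of j] by (simp add: e'_def d_def)
  have cP: "conn G ?M (Suc j) True (degen G (Suc p) j e) = P"
    unfolding P_def using conn_degen[OF ee(1), of "Suc j" j True] j by simp
  have cQ: "conn G ?M (Suc j) False (degen G (Suc p) j e') = Q"
    unfolding Q_def using conn_degen[OF ee(2), of "Suc j" j False] j by simp
  have k3: "composable G ?N (Suc (Suc j)) P Y"
    using Yc fY1 ee j unfolding cP[symmetric] by (simp add: cs)
  have k4: "composable G ?N (Suc (Suc j)) (comp G ?N (Suc (Suc j)) P Y) Q"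
    using k3 Yc fY2 ee j unfolding cP[symmetric] cQ[symmetric] by (simp add: cs)
  have PQ: "psi G ?N j P = P" "psi G ?N j Q = Q"
    unfolding P_def Q_def using psi_degen_same ee j by (simp_all add: cs)
  have lhs: "psi G ?N j (psi G ?N (Suc j) Y) = comp G ?N (Suc (Suc j)) (comp G ?N (Suc (Suc j)) P Y) Q"
  proof -
    have "psi G ?N (Suc j) Y = comp G ?N (Suc (Suc j)) (comp G ?N (Suc (Suc j)) P Y) Q"
      unfolding psi_S[of _ "Suc j"] fY1 fY2 cP cQ by simp
    moreover have "psi G ?N j Y = Y" unfolding Y_def using psi_idem x j by simp
    ultimately show ?thesis using psi_dist[OF k4 j(1) j2] psi_dist[OF k3 j(1) j2] PQ by simp
  qed
  have fX: "face G ?N (Suc (Suc j)) a X = psi G ?M j (face G ?N (Suc (Suc j)) a x)" for a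
    unfolding X_def using psi_face_hi[OF x, of j "Suc (Suc j)" a] j by simp
  have Xc: "X \<in> cell G ?N" using x j by (simp add: X_def)
  have k5: "composable G ?N (Suc (Suc j)) (conn G ?M (Suc j) True (psi G ?M j c)) X"
    using Xc fX cd j by (simp add: cs c_def)
  have k6: "composable G ?N (Suc (Suc j)) (comp G ?N (Suc (Suc j)) (conn G ?M (Suc j) True (psi G ?M j c)) X) (conn G ?M (Suc j) False (psi G ?M j d))"
    unfolding composable_iff
  proof (intro conjI)
    show "comp G ?N (Suc (Suc j)) (conn G ?M (Suc j) True (psi G ?M j c)) X \<in> cell G ?N" using comp_cell[OF k5] .
    show "conn G ?M (Suc j) False (psi G ?M j d) \<in> cell G ?N" using cd j by (simp add: cs)
    show "face G ?N (Suc (Suc j)) True (comp G ?N (Suc (Suc j)) (conn G ?M (Suc j) True (psi G ?M j c)) X) =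
      face G ?N (Suc (Suc j)) False (conn G ?M (Suc j) False (psi G ?M j d))"
      using face_comp_T[OF k5] fX[of True] cd j by (simp add: d_def)
  qed (use j in simp_all)
  have rhs: "psi G ?N j (psi G ?N (Suc j) X) = comp G ?N (Suc (Suc j)) (comp G ?N (Suc (Suc j)) (comp G ?N (Suc (Suc j)) P A) X) (comp G ?N (Suc (Suc j)) B Q)"
  proof -
    have "psi G ?N (Suc j) X = comp G ?N (Suc (Suc j)) (comp G ?N (Suc (Suc j)) (conn G ?M (Suc j) True (psi G ?M j c)) X) (conn G ?M (Suc j) False (psi G ?M j d))"
      unfolding psi_S[of _ "Suc j"] fX c_def d_def by simp
    moreover have "psi G ?N j X = X" unfolding X_def using psi_idem x j by simp
    ultimately show ?thesis using psi_dist[OF k6 j(1) j2] psi_dist[OF k5 j(1) j2] Wplus[OF cd(1) j] Wminus[OF cd(2) j]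
      by (simp add: P_def Q_def A_def B_def e_def e'_def)
  qed
  have Ac: "A \<in> cell G ?N" "B \<in> cell G ?N" "P \<in> cell G ?N" "Q \<in> cell G ?N"
    using cd ee j by (simp_all add: A_def B_def P_def Q_def cs)
  have kAX: "composable G ?N (Suc (Suc j)) A X"
    unfolding A_def X_def using psi_composable[OF k1 j(1) j2] .
  have kXB: "composable G ?N (Suc (Suc j)) X B"
    unfolding composable_iff using Xc Ac j fX cd psi_face_hi[of "conn G ?M (Suc j) False d" "Suc p" j "Suc (Suc j)" False]
    by (simp add: cs B_def d_def)
  have kPA: "composable G ?N (Suc (Suc j)) P A"
    unfolding composable_iff using Ac j cd ee psi_face_hi[of "conn G ?M (Suc j) True c" "Suc p" j "Suc (Suc j)" False]
      psi_degen_succ[OF ee(1), of j]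
    by (simp add: cs A_def P_def e_def)
  have kBQ: "composable G ?N (Suc (Suc j)) B Q"
    unfolding composable_iff using Ac j cd ee psi_face_hi[of "conn G ?M (Suc j) False d" "Suc p" j "Suc (Suc j)" True]
      psi_degen_succ[OF ee(2), of j]
    by (simp add: cs B_def Q_def e'_def)
  have "comp G ?N (Suc (Suc j)) (comp G ?N (Suc (Suc j)) P (comp G ?N (Suc (Suc j)) (comp G ?N (Suc (Suc j)) A X) B)) Q
     = comp G ?N (Suc (Suc j)) (comp G ?N (Suc (Suc j)) (comp G ?N (Suc (Suc j)) P A) X) (comp G ?N (Suc (Suc j)) B Q)"
    using kPA kAX kXB kBQ by (simp add: assoc compL compR)
  then show ?thesis using lhs rhs py unfolding Y_def X_def by simp
qed


lemma psi_cell': "x \<in> cell G N \<Longrightarrow> 1 \<le> i \<Longrightarrow> i < N \<Longrightarrow> psi G N i x \<in> cell G N"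
  using psi_cell[of x "N - 1" i] by (cases N) auto

lemma psi_idem': assumes "x \<in> cell G N" "1 \<le> i" "i < N"
  shows "psi G N i (psi G N i x) = psi G N i x"
proof -
  have N: "N = Suc (Suc (N - 2))" using assms by simp
  show ?thesis using psi_idem[of x "N - 2" i] assms N by (metis Suc_less_eq less_Suc_eq_le)
qed

lemma psi_comm': assumes "x \<in> cell G N" "1 \<le> a" "Suc (Suc a) \<le> b" "b < N"
  shows "psi G N a (psi G N b x) = psi G N b (psi G N a x)"
proof -
  have N: "N = Suc (Suc (N - 2))" using assms by simp
  show ?thesis using psi_comm[of x "N - 2" a b] assms N by (metis Suc_less_eq less_Suc_eq_le)
qed

lemma W': assumes "x \<in> cell G N" "1 \<le> j" "Suc (Suc j) \<le> N"
  shows "psi G N j (psi G N (Suc j) (psi G N j (psi G N (Suc j) x))) = psi G N j (psi G N (Suc j) (psi G N j x))"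
proof -
  have N: "N = Suc (Suc (Suc (N - 3)))" using assms by simp
  have "j \<le> Suc (N - 3)" using assms by simp
  then show ?thesis using W[of x "N - 3" j] assms N by metis
qed

end

fun Qs :: "'a cubcat \<Rightarrow> nat \<Rightarrow> nat \<Rightarrow> nat \<Rightarrow> 'a \<Rightarrow> 'a" where
  "Qs G n a 0 x = x"
| "Qs G n a (Suc b) x = (if b < a then x else psi G n b (Qs G n a b x))"

lemma Psi_Qs: "Psi G n r x = Qs G n 1 r x"
  by (induction r) auto

context cc begin

lemma Qs_cell: "x \<in> cell G N \<Longrightarrow> 1 \<le> a \<Longrightarrow> b \<le> N \<Longrightarrow> Qs G N a b x \<in> cell G N"
  by (induction b) (auto intro: psi_cell')

lemma Qs_comm: "x \<in> cell G N \<Longrightarrow> 1 \<le> a \<Longrightarrow> 1 \<le> i \<Longrightarrow> i < N \<Longrightarrow> b \<le> N \<Longrightarrow>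
   (\<forall>k. a \<le> k \<and> k < b \<longrightarrow> Suc (Suc i) \<le> k \<or> Suc (Suc k) \<le> i) \<Longrightarrow>
   Qs G N a b (psi G N i x) = psi G N i (Qs G N a b x)"
proof (induction b)
  case 0 then show ?case by simp
next
  case (Suc b)
  show ?case
  proof (cases "b < a")
    case True then show ?thesis by simp
  next
    case False
    have IH: "Qs G N a b (psi G N i x) = psi G N i (Qs G N a b x)" using Suc by auto
    have qc: "Qs G N a b x \<in> cell G N" using Suc Qs_cell by auto
    have "Suc (Suc i) \<le> b \<or> Suc (Suc b) \<le> i" using Suc.prems(6) False by auto
    then have "psi G N b (psi G N i (Qs G N a b x)) = psi G N i (psi G N b (Qs G N a b x))"
    proof
      assume "Suc (Suc i) \<le> b" then show ?thesis using psi_comm'[OF qc, of i b] Suc.prems by simp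
    next
      assume "Suc (Suc b) \<le> i" then show ?thesis using psi_comm'[OF qc, of b i] Suc.prems False by simp
    qed
    then show ?thesis using False IH by simp
  qed
qed

lemma Qs_split: "a \<le> b \<Longrightarrow> b \<le> c \<Longrightarrow> Qs G N a c x = Qs G N b c (Qs G N a b x)"
proof (induction c)
  case 0 then show ?case by simp
next
  case (Suc c)
  show ?case
  proof (cases "b = Suc c")
    case True
    then show ?thesis by simp
  next
    case False
    then have "b \<le> c" using Suc by simp
    then show ?thesis using Suc by simp
  qed
qed

lemma main: "m \<le> N \<Longrightarrow> x \<in> cell G N \<Longrightarrow> 1 \<le> i \<Longrightarrow> Suc i \<le> m \<Longrightarrow> Phi G N m (psi G N i x) = Phi G N m x"
proof (induction m arbitrary: i x rule: less_induct)
  case (less m)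
  obtain m' where m: "m = Suc m'" using less by (cases m) auto
  have x: "x \<in> cell G N" and i: "1 \<le> i" "Suc i \<le> m" and mN: "m \<le> N" using less by auto
  have Phi_eq: "Phi G N m y = Phi G N m' (Qs G N 1 m y)" for y using m by (simp add: Psi_Qs)
  have px: "psi G N i x \<in> cell G N" using x i mN psi_cell' by simp
  show ?case
  proof (cases "i = 1")
    case True
    have "Qs G N 1 m (psi G N i x) = Qs G N 2 m (Qs G N 1 2 (psi G N i x))"
      using Qs_split[of 1 2 m] i by simp
    also have "Qs G N 1 2 (psi G N i x) = psi G N 1 (psi G N 1 x)" using True by (simp add: numeral_2_eq_2)
    also have "\<dots> = psi G N 1 x" using psi_idem'[OF x, of 1] i mN True by simp
    also have "\<dots> = Qs G N 1 2 x" by (simp add: numeral_2_eq_2)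
    also have "Qs G N 2 m (Qs G N 1 2 x) = Qs G N 1 m x"
      using Qs_split[of 1 2 m] i True by simp
    finally show ?thesis using Phi_eq by simp
  next
    case False
    then have i2: "2 \<le> i" using i by simp
    define j where "j = i - 1"
    have ij: "i = Suc j" "1 \<le> j" using i2 by (simp_all add: j_def)
    define z where "z = Qs G N 1 j x"
    have zc: "z \<in> cell G N" using x i mN Qs_cell by (simp add: z_def ij)
    have IHapp: "Phi G N m' (Qs G N (Suc i) m (psi G N j v)) = Phi G N m' (Qs G N (Suc i) m v)"
      if v: "v \<in> cell G N" for v
    proof -
      have "Qs G N (Suc i) m (psi G N j v) = psi G N j (Qs G N (Suc i) m v)"
        by (rule Qs_comm) (use v i mN ij in auto)
      moreover have "Phi G N m' (psi G N j (Qs G N (Suc i) m v)) = Phi G N m' (Qs G N (Suc i) m v)"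
      proof -
        have qv: "Qs G N (Suc i) m v \<in> cell G N" using Qs_cell[OF v, of "Suc i" m] mN by simp
        have a: "m' < m" "m' \<le> N" "Suc j \<le> m'" using m i mN ij by simp_all
        show ?thesis using less.IH[OF a(1) a(2) qv ij(2) a(3)] .
      qed
      ultimately show ?thesis by simp
    qed
    have split: "Qs G N 1 m y = Qs G N (Suc i) m (psi G N i (psi G N j (Qs G N 1 j y)))" for y
    proof -
      have "Qs G N 1 m y = Qs G N (Suc i) m (Qs G N 1 (Suc i) y)" using Qs_split[of 1 "Suc i" m] i by simp
      moreover have "Qs G N 1 (Suc i) y = psi G N i (psi G N j (Qs G N 1 j y))" using ij by simp
      ultimately show ?thesis by simp
    qed
    have comm: "Qs G N 1 j (psi G N i x) = psi G N i z"
      unfolding z_def by (rule Qs_comm) (use x i mN ij in auto)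
    have c1: "psi G N j (psi G N i z) \<in> cell G N" using zc i mN ij by (simp add: psi_cell')
    have c2: "psi G N i (psi G N j (psi G N i z)) \<in> cell G N" using c1 i mN ij by (simp add: psi_cell')
    have c3: "psi G N i (psi G N j z) \<in> cell G N" using zc i mN ij by (simp add: psi_cell')
    have Wz: "psi G N j (psi G N i (psi G N j (psi G N i z))) = psi G N j (psi G N i (psi G N j z))"
      using W'[OF zc ij(2)] ij i mN by simp
    have "Phi G N m (psi G N i x) = Phi G N m' (Qs G N (Suc i) m (psi G N i (psi G N j (psi G N i z))))"
      using Phi_eq split comm by simp
    also have "\<dots> = Phi G N m' (Qs G N (Suc i) m (psi G N j (psi G N i (psi G N j (psi G N i z)))))"
      using IHapp[OF c2] by simp
    also have "\<dots> = Phi G N m' (Qs G N (Suc i) m (psi G N j (psi G N i (psi G N j z))))"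
      using Wz by simp
    also have "\<dots> = Phi G N m' (Qs G N (Suc i) m (psi G N i (psi G N j z)))"
      using IHapp[OF c3] by simp
    also have "\<dots> = Phi G N m x" using Phi_eq split by (simp add: z_def)
    finally show ?thesis .
  qed
qed

end

theorem theorem5p4:
  fixes G :: "'a cubcat" and n m i :: nat and x :: 'a
  assumes "cubical_omega_cat_conn G"
    and "m \<le> n" and "1 \<le> i" and "i \<le> m - 1"
    and "x \<in> cell G n"
  shows "Phi G n m (psi G n i x) = Phi G n m x"
proof -
  interpret cc G by (rule cc.intro) (rule assms(1))
  show ?thesis using main[of m n x i] assms by simp
qed

end
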